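(* Let $n_0,n_1,n_\infty$ be integers with $1\le n_0\le n_1\le n_\infty$, $n=n_0+n_1+n_\infty$, and let $\mathcal{S}_{\mathrm{reg}}=\{(\xi,\eta)\in\mathbb{C}^2 : \eta^n=\xi^{n-n_0}(1-\xi)^{n-n_1}\}\setminus\{(0,0),(1,0)\}$ with the Riemannian metric $\Gamma=\frac{1}{\eta}\,d\xi\odot\frac{1}{\overline{\eta}}\,\overline{d\xi}$. Let $X$ be the holomorphic vector field on $\mathcal{S}_{\mathrm{reg}}$ given by $$X(\xi,\eta)=\eta\frac{\partial}{\partial\xi}+\frac{n-n_0}{n}\,\frac{\xi^{n-n_0-1}(1-\xi)^{n-n_1-1}\bigl(1-\frac{2n-n_0-n_1}{n-n_0}\xi\bigr)}{\eta^{n-2}}\frac{\partial}{\partial\eta}.$$ Then $X$ is the geodesic vector field for the flat Riemannian metric $\Gamma$ on $\mathcal{S}_{\mathrm{reg}}$, i.e. its (real-time) integral curves are geodesics of $(\mathcal{S}_{\mathrm{reg}},\Gamma)$.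
   Context: $X$ is tangent to $\mathcal{S}_{\mathrm{reg}}$ at every point and nowhere vanishing. A holomorphic vector field is regarded as a real vector field on the underlying real surface in the usual way. *)

theory Defs
  imports "HOL-Complex_Analysis.Complex_Analysis"
begin

definition Sreg :: "nat \<Rightarrow> nat \<Rightarrow> nat \<Rightarrow> (complex \<times> complex) set" where
  "Sreg n0 n1 ninf =
     (let n = n0 + n1 + ninf in
       {(xi, eta). eta ^ n = xi ^ (n - n0) * (1 - xi) ^ (n - n1)} - {(0, 0), (1, 0)})"

text \<open>The holomorphic vector field X, as the pair of its coefficients of d/dxi and d/deta;
  as a real vector field on the underlying real surface it is the same pair viewed in
  the real vector space complex x complex.\<close>
definition Xfield :: "nat \<Rightarrow> nat \<Rightarrow> nat \<Rightarrow> complex \<times> complex \<Rightarrow> complex \<times> complex" where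
  "Xfield n0 n1 ninf p =
     (let n = n0 + n1 + ninf; xi = fst p; eta = snd p in
       (eta,
        of_nat (n - n0) / of_nat n * xi ^ (n - n0 - 1) * (1 - xi) ^ (n - n1 - 1)
          * (1 - of_nat (2 * n - n0 - n1) / of_nat (n - n0) * xi) / eta ^ (n - 2)))"

text \<open>Geodesic equation for the conformal Riemannian metric e^(2u) (dx^2 + dy^2) on a domain
  of the complex plane (real coordinates x = Re z, y = Im z), written with the Christoffel
  symbols of the Levi-Civita connection:
  c'' + 2 <grad u, c'> c' - |c'|^2 grad u = 0, where grad u is identified with the complex
  number g such that Du(z) w = Re (cnj g * w).\<close>
definition conf_geodesic :: "(complex \<Rightarrow> real) \<Rightarrow> real set \<Rightarrow> (real \<Rightarrow> complex) \<Rightarrow> bool" where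
  "conf_geodesic u J c \<longleftrightarrow>
     open J \<and>
     (\<forall>t\<in>J. c differentiable (at t) \<and>
        (\<lambda>s. vector_derivative c (at s)) differentiable (at t) \<and>
        (\<exists>g. (u has_derivative (\<lambda>w. Re (cnj g * w))) (at (c t)) \<and>
             vector_derivative (\<lambda>s. vector_derivative c (at s)) (at t)
             + of_real (2 * Re (cnj g * vector_derivative c (at t))) * vector_derivative c (at t)
             - of_real ((cmod (vector_derivative c (at t)))\<^sup>2) * g = 0))"

text \<open>A curve gamma on an open set J of times is a geodesic of (Sreg, Gamma),
  Gamma = (1/eta) dxi . (1/cnj eta) cnj dxi: near every time it lies on the graph of a local
  holomorphic branch eta = h(xi) of the surface over an open set U (where xi is a holomorphic
  chart), and in this chart Gamma = |dxi|^2 / |h(xi)|^2 = e^(2u)|dxi|^2 with u = - ln |h|,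
  so the xi-component satisfies the geodesic equation of that metric.\<close>
definition Sreg_geodesic :: "nat \<Rightarrow> nat \<Rightarrow> nat \<Rightarrow> real set \<Rightarrow> (real \<Rightarrow> complex \<times> complex) \<Rightarrow> bool" where
  "Sreg_geodesic n0 n1 ninf J \<gamma> \<longleftrightarrow>
     open J \<and> (\<forall>t\<in>J. \<gamma> t \<in> Sreg n0 n1 ninf) \<and>
     (\<forall>t0\<in>J. \<exists>U h \<epsilon>. open U \<and> fst (\<gamma> t0) \<in> U \<and> h holomorphic_on U \<and>
        (\<forall>z\<in>U. (z, h z) \<in> Sreg n0 n1 ninf) \<and> \<epsilon> > 0 \<and>
        (\<forall>s\<in>J \<inter> ball t0 \<epsilon>. fst (\<gamma> s) \<in> U \<and> snd (\<gamma> s) = h (fst (\<gamma> s))) \<and>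
        conf_geodesic (\<lambda>z. - ln (cmod (h z))) (J \<inter> ball t0 \<epsilon>) (fst \<circ> \<gamma>))"

end

theory Submission imports Defs begin
lemma u_deriv:
  fixes h :: "complex \<Rightarrow> complex"
  assumes "(h has_field_derivative a) (at z)" "h z \<noteq> 0"
  shows "((\<lambda>z. - ln (cmod (h z))) has_derivative (\<lambda>w. Re (cnj (- cnj (a / h z)) * w))) (at z)"
proof -
  have n: "(cmod has_derivative (\<lambda>y. inner y (sgn (h z)))) (at (h z))"
    using has_derivative_norm[OF assms(2)] by simp
  have c: "((\<lambda>z. cmod (h z)) has_derivative (\<lambda>w. inner (a*w) (sgn (h z)))) (at z)"
    using has_derivative_compose[OF assms(1)[unfolded has_field_derivative_def] n] by (simp add: o_def)
  have l: "((\<lambda>z. ln (cmod (h z))) has_derivative (\<lambda>w. inner (a*w) (sgn (h z)) * inverse (cmod (h z)))) (at z)"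
    using has_derivative_ln[OF _ c] assms(2) by simp
  have e: "inner (a*w) (sgn (h z)) * inverse (cmod (h z)) = Re (a / h z * w)" for w
  proof -
    have "inner (a*w) (sgn (h z)) * inverse (cmod (h z)) = inner (a*w) (h z) / (cmod (h z))^2"
      by (simp add: sgn_div_norm power2_eq_square divide_inverse)
    also have "\<dots> = Re (a / h z * w)"
      using assms(2) cmod_power2[of "h z"]
      by (simp add: inner_complex_def complex_norm_square[symmetric] cmod_power2 Re_divide field_simps power2_eq_square)
    finally show ?thesis .
  qed
  show ?thesis
    using has_derivative_minus[OF l] e by simp
qed

lemma vd_fst:
  assumes "(f has_vector_derivative D) (at t)"
  shows "((\<lambda>s. fst (f s)) has_vector_derivative fst D) (at t)"
  using has_derivative_fst[OF assms[unfolded has_vector_derivative_def]]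
  unfolding has_vector_derivative_def by simp

lemma vd_snd:
  assumes "(f has_vector_derivative D) (at t)"
  shows "((\<lambda>s. snd (f s)) has_vector_derivative snd D) (at t)"
  using has_derivative_snd[OF assms[unfolded has_vector_derivative_def]]
  unfolding has_vector_derivative_def by simp

lemma branch:
  fixes P :: "complex \<Rightarrow> complex"
  assumes P: "P = (\<lambda>z. z ^ a * (1 - z) ^ b)" and e: "\<eta>0 ^ n = P \<xi>0" and ne: "\<eta>0 \<noteq> 0" and n: "n \<ge> 1"
  shows "\<exists>U h. open U \<and> \<xi>0 \<in> U \<and> h holomorphic_on U \<and> (\<forall>z\<in>U. h z ^ n = P z \<and> h z \<noteq> 0) \<and> h \<xi>0 = \<eta>0"
proof -
  define p0 where "p0 = P \<xi>0"
  have p0: "p0 \<noteq> 0" using e ne p0_def by auto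
  define U where "U = {z. cmod (P z / p0 - 1) < 1}"
  define h where "h = (\<lambda>z. \<eta>0 * exp (Ln (P z / p0) / of_nat n))"
  have cP: "continuous_on UNIV P" unfolding P by (intro continuous_intros)
  have "open U" unfolding U_def
    by (intro open_Collect_less continuous_intros) (use cP p0 in \<open>auto intro: continuous_on_subset\<close>)
  moreover have "\<xi>0 \<in> U" using p0 by (simp add: U_def p0_def)
  moreover have nz: "P z / p0 \<notin> \<real>\<^sub>\<le>\<^sub>0" if "z \<in> U" for z
  proof
    assume "P z / p0 \<in> \<real>\<^sub>\<le>\<^sub>0"
    hence "Re (P z / p0) \<le> 0" by (simp add: complex_nonpos_Reals_iff)
    moreover have "\<bar>Re (P z / p0 - 1)\<bar> < 1"
      using that abs_Re_le_cmod[of "P z / p0 - 1"] by (simp add: U_def)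
    ultimately show False by simp
  qed
  moreover have "h holomorphic_on U" unfolding h_def P
    by (intro holomorphic_intros) (use nz P in auto)
  moreover have "h z ^ n = P z \<and> h z \<noteq> 0" if "z \<in> U" for z
  proof -
    have "P z / p0 \<noteq> 0" using nz[OF that] by auto
    have "h z ^ n = \<eta>0 ^ n * exp (of_nat n * (Ln (P z / p0) / of_nat n))"
      by (simp add: h_def power_mult_distrib exp_of_nat_mult[symmetric] del: exp_of_nat_mult)
    also have "\<dots> = \<eta>0 ^ n * (P z / p0)" using n \<open>P z / p0 \<noteq> 0\<close> by simp
    also have "\<dots> = P z" using e p0 by (simp add: p0_def)
    finally show ?thesis using ne by (simp add: h_def)
  qed
  moreover have "h \<xi>0 = \<eta>0" using p0 by (simp add: h_def p0_def)
  ultimately show ?thesis by blast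
qed

lemma alg:
  fixes a b :: complex
  assumes "b \<noteq> 0"
  shows "b * a + complex_of_real (2 * Re (cnj (- cnj (a / b)) * b)) * b
         - complex_of_real ((cmod b)\<^sup>2) * (- cnj (a / b)) = 0"
proof -
  have 1: "cnj (- cnj (a / b)) * b = - a" using assms by simp
  have 2: "complex_of_real ((cmod b)\<^sup>2) * (- cnj (a / b)) = - b * cnj a"
  proof -
    have "(complex_of_real (cmod b))\<^sup>2 = b * cnj b" using complex_norm_square[of b] by simp
    thus ?thesis using assms by (simp add: field_simps)
  qed
  have 3: "complex_of_real (2 * Re a) = a + cnj a" by (simp add: complex_add_cnj)
  show ?thesis unfolding 1 2 using 3 by (simp add: algebra_simps)
qed

lemma Sreg_iff:
  assumes "1 \<le> n0" "n0 \<le> n1" "n1 \<le> ninf"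
  shows "p \<in> Sreg n0 n1 ninf \<longleftrightarrow>
    snd p ^ (n0+n1+ninf) = fst p ^ (n0+n1+ninf - n0) * (1 - fst p) ^ (n0+n1+ninf - n1) \<and> snd p \<noteq> 0"
proof (cases p)
  case (Pair x y)
  have a: "n0+n1+ninf - n0 \<noteq> 0" "n0+n1+ninf - n1 \<noteq> 0" "n0+n1+ninf \<noteq> 0" using assms by auto
  show ?thesis
  proof
    assume "p \<in> Sreg n0 n1 ninf"
    hence e: "y ^ (n0+n1+ninf) = x ^ (n0+n1+ninf - n0) * (1 - x) ^ (n0+n1+ninf - n1)" and ex: "(x,y) \<noteq> (0,0)" "(x,y) \<noteq> (1,0)"
      using Pair by (auto simp: Sreg_def Let_def)
    have "y \<noteq> 0"
    proof
      assume "y = 0"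
      hence "x ^ (n0+n1+ninf - n0) * (1 - x) ^ (n0+n1+ninf - n1) = 0" by (metis e a(3) zero_power gr0I \<open>y = 0\<close>)
      hence "x ^ (n0+n1+ninf - n0) = 0 \<or> (1 - x) ^ (n0+n1+ninf - n1) = 0" by (simp only: mult_eq_0_iff)
      hence "x = 0 \<or> 1 - x = 0" by (metis power_eq_0_iff)
      hence "x = 0 \<or> x = 1" by auto
      thus False using ex \<open>y = 0\<close> by auto
    qed
    thus "snd p ^ (n0+n1+ninf) = fst p ^ (n0+n1+ninf - n0) * (1 - fst p) ^ (n0+n1+ninf - n1) \<and> snd p \<noteq> 0"
      using e Pair by simp
  next
    assume "snd p ^ (n0+n1+ninf) = fst p ^ (n0+n1+ninf - n0) * (1 - fst p) ^ (n0+n1+ninf - n1) \<and> snd p \<noteq> 0"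
    thus "p \<in> Sreg n0 n1 ninf" using Pair by (auto simp: Sreg_def Let_def)
  qed
qed

theorem corollary5:
  fixes n0 n1 ninf :: nat and J :: "real set" and \<gamma> :: "real \<Rightarrow> complex \<times> complex"
  assumes "1 \<le> n0" and "n0 \<le> n1" and "n1 \<le> ninf"
    and "open J"
    and "\<forall>t\<in>J. \<gamma> t \<in> Sreg n0 n1 ninf"
    and "\<forall>t\<in>J. (\<gamma> has_vector_derivative Xfield n0 n1 ninf (\<gamma> t)) (at t)"
  shows "Sreg_geodesic n0 n1 ninf J \<gamma>"
proof -
  define n where "n = n0 + n1 + ninf"
  define P where "P = (\<lambda>z::complex. z ^ (n - n0) * (1 - z) ^ (n - n1))"
  have n1: "n \<ge> 1" using assms(1) n_def by simp
  have SI: "p \<in> Sreg n0 n1 ninf \<longleftrightarrow> snd p ^ n = P (fst p) \<and> snd p \<noteq> 0" for p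
    using Sreg_iff[OF assms(1-3)] by (simp add: n_def P_def)
  define \<xi> where "\<xi> = (\<lambda>s. fst (\<gamma> s))"
  define \<eta> where "\<eta> = (\<lambda>s. snd (\<gamma> s))"
  have fc: "fst \<circ> \<gamma> = \<xi>" by (auto simp: \<xi>_def)
  have dxi: "(\<xi> has_vector_derivative \<eta> s) (at s)" if "s \<in> J" for s
    using vd_fst[OF assms(6)[rule_format, OF that]] by (simp add: \<xi>_def \<eta>_def Xfield_def Let_def)
  have memb: "\<eta> s ^ n = P (\<xi> s) \<and> \<eta> s \<noteq> 0" if "s \<in> J" for s
    using assms(5) that SI by (auto simp: \<xi>_def \<eta>_def)
  have cont: "isCont \<gamma> s" if "s \<in> J" for s
    using has_vector_derivative_continuous[OF assms(6)[rule_format, OF that]] .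
  have main: "\<exists>U h \<epsilon>. open U \<and> \<xi> t0 \<in> U \<and> h holomorphic_on U \<and>
        (\<forall>z\<in>U. (z, h z) \<in> Sreg n0 n1 ninf) \<and> \<epsilon> > 0 \<and>
        (\<forall>s\<in>J \<inter> ball t0 \<epsilon>. \<xi> s \<in> U \<and> \<eta> s = h (\<xi> s)) \<and>
        conf_geodesic (\<lambda>z. - ln (cmod (h z))) (J \<inter> ball t0 \<epsilon>) \<xi>" if t0: "t0 \<in> J" for t0
  proof -
    obtain U h where U: "open U" "\<xi> t0 \<in> U" and hol: "h holomorphic_on U"
      and hU: "\<forall>z\<in>U. h z ^ n = P z \<and> h z \<noteq> 0" and h0: "h (\<xi> t0) = \<eta> t0"
      using branch[OF P_def _ _ n1, of "\<eta> t0" "\<xi> t0"] memb[OF t0] by blast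
    have hS: "\<forall>z\<in>U. (z, h z) \<in> Sreg n0 n1 ninf" using hU SI by auto
    have ch: "isCont h (\<xi> t0)"
      using holomorphic_on_imp_continuous_on[OF hol] U continuous_on_eq_continuous_at by blast
    have cxi: "isCont \<xi> t0" unfolding \<xi>_def using cont[OF t0] by (intro continuous_intros)
    have ceta: "isCont \<eta> t0" unfolding \<eta>_def using cont[OF t0] by (intro continuous_intros)
    define r where "r = (\<lambda>s. \<eta> s / h (\<xi> s))"
    have chx: "isCont (\<lambda>s. h (\<xi> s)) t0" using isCont_o2[OF cxi ch] .
    have cr: "isCont r t0" unfolding r_def
      using ceta chx hU U by (intro continuous_intros) auto
    have r0: "r t0 = 1"
      using h0 memb[OF t0] by (simp add: r_def)
    obtain \<delta> where \<delta>: "\<delta> > 0" "\<forall>x\<in>{z::complex. z ^ n = 1}. x \<noteq> 1 \<longrightarrow> \<delta> \<le> dist 1 x"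
      using finite_set_avoid[OF finite_roots_unity[OF n1], of 1] by blast
    obtain d1 where d1: "d1 > 0" "\<forall>s. dist s t0 < d1 \<longrightarrow> dist (r s) (r t0) < \<delta>"
      using cr \<delta>(1) unfolding continuous_at_eps_delta by blast
    obtain e where e: "e > 0" "ball (\<xi> t0) e \<subseteq> U" using U open_contains_ball by blast
    obtain d2 where d2: "d2 > 0" "\<forall>s. dist s t0 < d2 \<longrightarrow> dist (\<xi> s) (\<xi> t0) < e"
      using cxi e(1) unfolding continuous_at_eps_delta by blast
    obtain d3 where d3: "d3 > 0" "ball t0 d3 \<subseteq> J" using assms(4) t0 open_contains_ball by blast
    define \<epsilon> where "\<epsilon> = min d1 (min d2 d3)"
    have \<epsilon>: "\<epsilon> > 0" using d1 d2 d3 by (simp add: \<epsilon>_def)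
    have key: "s \<in> J \<and> \<xi> s \<in> U \<and> \<eta> s = h (\<xi> s)" if "s \<in> ball t0 \<epsilon>" for s
    proof -
      have ds: "dist s t0 < \<epsilon>" using that by (simp add: dist_commute)
      have sJ: "s \<in> J" using d3 ds by (auto simp: \<epsilon>_def dist_commute)
      have sU: "\<xi> s \<in> U" using d2 ds e(2) by (auto simp: \<epsilon>_def dist_commute)
      have hn: "h (\<xi> s) \<noteq> 0" "h (\<xi> s) ^ n = P (\<xi> s)" using hU sU by auto
      have "r s ^ n = 1" using memb[OF sJ] hn by (metis r_def power_divide divide_self power_not_zero)
      moreover have "dist (r s) 1 < \<delta>" using d1 ds r0 by (auto simp: \<epsilon>_def)
      ultimately have "r s = 1" using \<delta>(2) by (force simp: dist_commute)
      hence "\<eta> s = h (\<xi> s)" using hn by (simp add: r_def)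
      thus ?thesis using sJ sU by simp
    qed
    define B where "B = J \<inter> ball t0 \<epsilon>"
    have oB: "open B" using assms(4) by (simp add: B_def open_Int)
    have cg: "conf_geodesic (\<lambda>z. - ln (cmod (h z))) B \<xi>"
      unfolding conf_geodesic_def
    proof (intro conjI ballI oB)
      fix t assume tB: "t \<in> B"
      have tJ: "t \<in> J" using tB by (simp add: B_def)
      show "\<xi> differentiable (at t)" using dxi[OF tJ] by (rule differentiableI_vector)
      define D where "D = (\<lambda>s. vector_derivative \<xi> (at s))"
      have Deq: "D s = h (\<xi> s)" if "s \<in> B" for s
        using key[of s] that vector_derivative_at[OF dxi[of s]] by (auto simp: B_def D_def)
      have tU: "\<xi> t \<in> U" and et: "\<eta> t = h (\<xi> t)" using key[of t] tB by (auto simp: B_def)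
      have hd: "(h has_field_derivative deriv h (\<xi> t)) (at (\<xi> t))"
        using holomorphic_derivI[OF hol U(1) tU] .
      have ch: "((h \<circ> \<xi>) has_vector_derivative (\<eta> t * deriv h (\<xi> t))) (at t)"
        using field_vector_diff_chain_at[OF dxi[OF tJ] hd] .
      have DD: "(D has_vector_derivative (\<eta> t * deriv h (\<xi> t))) (at t)"
        by (rule has_vector_derivative_transform_within_open[OF ch oB tB]) (simp add: Deq)
      show "(\<lambda>s. vector_derivative \<xi> (at s)) differentiable (at t)"
        using DD differentiableI_vector unfolding D_def by blast
      have hz: "h (\<xi> t) \<noteq> 0" using hU tU by auto
      have v1: "vector_derivative \<xi> (at t) = h (\<xi> t)" using Deq[OF tB] by (simp add: D_def)
      have v2: "vector_derivative (\<lambda>s. vector_derivative \<xi> (at s)) (at t) = h (\<xi> t) * deriv h (\<xi> t)"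
        using vector_derivative_at[OF DD] et by (simp add: D_def)
      show "\<exists>g. ((\<lambda>z. - ln (cmod (h z))) has_derivative (\<lambda>w. Re (cnj g * w))) (at (\<xi> t)) \<and>
             vector_derivative (\<lambda>s. vector_derivative \<xi> (at s)) (at t)
             + of_real (2 * Re (cnj g * vector_derivative \<xi> (at t))) * vector_derivative \<xi> (at t)
             - of_real ((cmod (vector_derivative \<xi> (at t)))\<^sup>2) * g = 0"
        apply (rule exI[of _ "- cnj (deriv h (\<xi> t) / h (\<xi> t))"])
        using u_deriv[OF hd hz] alg[OF hz, of "deriv h (\<xi> t)"] unfolding v1 v2 by simp
    qed
    show ?thesis
      apply (rule exI[of _ U], rule exI[of _ h], rule exI[of _ \<epsilon>])
      using U hol hS \<epsilon> key cg by (auto simp: B_def)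
  qed
  show ?thesis
    unfolding Sreg_geodesic_def using assms(4,5) main by (simp add: fc \<xi>_def \<eta>_def)
qed

end
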